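(* Let $F_1,F_2$ be continuous cumulative distribution functions of nonnegative random variables with the same finite mean $\mu>0$, each strictly increasing on the set where it lies strictly between $0$ and $1$, with Lorenz curves $LC_1,LC_2$. Suppose $LC_1(p)\ge LC_2(p)$ for all $p\in[0,1]$. Let $m>1$ and $0<r<m\mu$, and for $i=1,2$ let $\tau_i$ solve $m\int_0^{\tau_i}x\,dF_i(x)=r$ and $\theta_i$ solve $\int_{\theta_i}^\infty x\,dF_i(x)=r/m$. Then $$F_1(\tau_1)\le F_2(\tau_2)\quad\text{and}\quad 1-F_1(\theta_1)\ge 1-F_2(\theta_2).$$ Consequently the sets $\{m>1: 1/m<1-F_i(\theta_i)\}$ and $\{m>1: 1/m>F_i(\tau_i)\}$ (with $r,\mu$ fixed and $\tau_i,\theta_i$ depending on $m$) are each larger (in the sense of inclusion) for $i=1$ than for $i=2$.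
   Context: The Lorenz curve of a distribution $F$ with mean $\mu$ is $LC(p)=\frac{1}{\mu}\int_0^p F^{-1}(t)\,dt$, $p\in[0,1]$, with $F^{-1}$ the quantile function. Interpretation: $1/m<1-F(\theta)$ means the strongest-first society can survive (hence every society form can), and $1/m>F(\tau)$ means the weakest-first society dies out almost surely (hence every society form does), in the resource dependent branching process model with mean offspring $m$ and mean individual production $r$. *)

theory Defs
  imports "HOL-Probability.Probability"
begin

text \<open>Quantile function (generalised inverse) of a distribution function F:
  F^{-1}(t) = inf {x. F x \<ge> t}.  (At t = 0 the value is irrelevant:
  it is a single point of Lebesgue measure zero.)\<close>
definition quantile :: "(real \<Rightarrow> real) \<Rightarrow> real \<Rightarrow> real" where
  "quantile F t = Inf {x. t \<le> F x}"

definition lorenz :: "real measure \<Rightarrow> real \<Rightarrow> real" where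
  "lorenz M p = (1 / (LINT x|M. x)) *
      (LBINT t=0..p. quantile (cdf M) t)"

end

theory Submission imports Defs begin

definition qf :: "real measure \<Rightarrow> real \<Rightarrow> real" where
  "qf M t = indicator {0<..<1} t * quantile (cdf M) t"

definition Lf :: "real measure \<Rightarrow> real \<Rightarrow> real" where
  "Lf M p = (LBINT t:{0..p}. qf M t)"

locale nnd = cdf_distribution +
  assumes nonneg: "AE x in M. 0 \<le> x"
    and contF: "continuous_on UNIV (cdf M)"
    and intM: "integrable M (\<lambda>x. x)"
begin

abbreviation "\<Omega> \<equiv> restrict_space lborel {0<..<1::real}"

lemma Q_eq: "quantile (cdf M) = I"
  by (simp add: quantile_def fun_eq_iff)

lemma meas_I: "I \<in> measurable \<Omega> borel"
proof -
  have "measurable \<Omega> borel = measurable (restrict_space borel {0<..<1::real}) borel"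
    by (rule measurable_cong_sets) (auto simp: sets_restrict_space)
  then show ?thesis using measurable_CI by simp
qed

lemma int_q: "integrable lborel (qf M)"
proof -
  have "integrable (distr \<Omega> borel I) (\<lambda>x. x)" using intM distr_I_eq_M by simp
  then have "integrable \<Omega> I" using integrable_distr_eq[OF meas_I, of "\<lambda>x. x"] by simp
  then have "integrable lborel (\<lambda>x. indicator {0<..<1::real} x *\<^sub>R I x)"
    by (subst integrable_restrict_space[symmetric]) auto
  then show ?thesis unfolding qf_def Q_eq by simp
qed

lemma F0: "cdf M 0 = 0"
proof -
  have a: "measure M {0} = 0" using contF isCont_cdf continuous_on_eq_continuous_at by blast
  have b: "measure M {..<0} = 0"
  proof -
    have "AE x in M. x \<notin> {..<0::real}" using nonneg by auto
    then have "emeasure M {..<0} = 0"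
      by (subst AE_iff_measurable[symmetric, of _ _ "\<lambda>x. \<not> x < 0"]) auto
    then show ?thesis by (simp add: measure_def)
  qed
  have "cdf M 0 = measure M ({..<0} \<union> {0})" by (simp add: cdf_def2 ivl_disj_un(2)[symmetric])
  also have "\<dots> \<le> measure M {..<0} + measure M {0}" by (rule measure_Un_le) auto
  finally show ?thesis using a b cdf_nonneg[of 0] by simp
qed

lemma Ipos: "0 < t \<Longrightarrow> t < 1 \<Longrightarrow> 0 < I t"
  using pseudoinverse[of t 0] F0 by auto

lemma q_nonneg: "0 \<le> qf M t"
  unfolding qf_def Q_eq using Ipos by (auto simp: indicator_def less_imp_le)

lemma K1: "(LINT x:{..y}|M. x) = Lf M (cdf M y)"
proof -
  have "(LINT x:{..y}|M. x) = integral\<^sup>L (distr \<Omega> borel I) (\<lambda>x. indicator {..y} x * x)"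
    using distr_I_eq_M by (simp add: set_lebesgue_integral_def)
  also have "\<dots> = integral\<^sup>L \<Omega> (\<lambda>t. indicator {..y} (I t) * I t)"
    by (rule integral_distr[OF meas_I]) auto
  also have "\<dots> = (LINT t|lborel. indicator {0<..<1} t *\<^sub>R (indicator {..y} (I t) * I t))"
    by (rule integral_restrict_space) auto
  also have "\<dots> = (LINT t|lborel. indicator {0..cdf M y} t *\<^sub>R qf M t)"
  proof (rule Bochner_Integration.integral_cong[OF refl])
    fix t :: real
    show "indicator {0<..<1} t *\<^sub>R (indicator {..y} (I t) * I t) = indicator {0..cdf M y} t *\<^sub>R qf M t"
    proof (cases "0 < t \<and> t < 1")
      case True
      then have e: "t \<le> cdf M y \<longleftrightarrow> I t \<le> y" using pseudoinverse[of t y] by blast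
      have "qf M t = I t" using True unfolding qf_def Q_eq by simp
      then show ?thesis using True e by (simp add: indicator_def)
    next
      case False
      then have "qf M t = 0" unfolding qf_def by simp
      then show ?thesis using False by (simp add: indicator_def)
    qed
  qed
  finally show ?thesis unfolding Lf_def set_lebesgue_integral_def .
qed


lemma si_q: "set_integrable lborel A (qf M)" if "A \<in> sets lborel" for A
  unfolding set_integrable_def using integrable_mult_indicator[OF that int_q] .

lemma K2: "(LINT x|M. x) = Lf M 1"
proof -
  have "(LINT x|M. x) = integral\<^sup>L (distr \<Omega> borel I) (\<lambda>x. x)"
    using distr_I_eq_M by simp
  also have "\<dots> = integral\<^sup>L \<Omega> I"
    by (rule integral_distr[OF meas_I]) auto
  also have "\<dots> = (LINT t|lborel. indicator {0<..<1} t *\<^sub>R I t)"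
    by (rule integral_restrict_space) auto
  also have "\<dots> = (LINT t|lborel. indicator {0..1} t *\<^sub>R qf M t)"
    by (rule Bochner_Integration.integral_cong[OF refl]) (auto simp: qf_def Q_eq indicator_def)
  finally show ?thesis unfolding Lf_def set_lebesgue_integral_def .
qed

lemma K_lorenz: assumes "0 \<le> p" and assms1: "p \<le> 1" shows "(LBINT t=0..p. quantile (cdf M) t) = Lf M p"
proof -
  have "(LBINT t=0..p. quantile (cdf M) t) = (LBINT t:{0<..<p}. quantile (cdf M) t)"
    using assms by (subst interval_integral_Ioo) auto
  also have "\<dots> = (LBINT t:{0<..<p}. qf M t)"
    by (rule set_lebesgue_integral_cong) (use assms1 in \<open>auto simp: qf_def\<close>)
  also have "\<dots> = (LBINT t=0..p. qf M t)"
    using assms by (subst interval_integral_Ioo) auto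
  also have "\<dots> = Lf M p"
    using assms interval_integral_Icc[of 0 p "qf M"] unfolding Lf_def by (simp add: zero_ereal_def)
  finally show ?thesis .
qed

lemma Lmono: assumes "0 \<le> a" "a < b" "b \<le> 1" shows "Lf M a < Lf M b"
proof -
  define c where "c = (a+b)/2"
  have c: "0 < c" "c < 1" "a < c" "c < b" using assms by (auto simp: c_def)
  have Ic: "0 < I c" using Ipos c by auto
  have "Lf M b = Lf M a + (LBINT t:{a<..b}. qf M t)"
  proof -
    have "{0..b} = {0..a} \<union> {a<..b}" using assms by auto
    then show ?thesis unfolding Lf_def by (simp only:) (rule set_integral_Un, auto intro: si_q)
  qed
  moreover have "0 < (LBINT t:{a<..b}. qf M t)"
  proof -
    have "(LBINT t:{c<..<b}. I c) \<le> (LBINT t:{a<..b}. qf M t)"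
      unfolding set_lebesgue_integral_def
    proof (rule integral_mono)
      show "integrable lborel (\<lambda>x. indicator {c<..<b} x *\<^sub>R I c)"
        using c by (intro integrable_scaleR_left integrable_real_indicator) (auto simp: emeasure_lborel_Ioo)
      show "integrable lborel (\<lambda>x. indicator {a<..b} x *\<^sub>R qf M x)"
        using si_q[of "{a<..b}"] by (simp add: set_integrable_def)
      fix t :: real
      show "indicator {c<..<b} t *\<^sub>R I c \<le> indicator {a<..b} t *\<^sub>R qf M t"
      proof (cases "c < t \<and> t < b")
        case True
        then have "qf M t = I t" using c assms unfolding qf_def Q_eq by simp
        moreover have "I c \<le> I t" using mono_I True c assms unfolding mono_on_def by auto
        ultimately show ?thesis using True c by (simp add: indicator_def)
      next
        case False
        then show ?thesis using q_nonneg[of t] by (auto simp: indicator_def)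
      qed
    qed
    moreover have "(LBINT t:{c<..<b}. I c) = (b - c) * I c"
      using c by (subst set_integral_const) auto
    moreover have "0 < (b - c) * I c" using c Ic by simp
    ultimately show ?thesis by linarith
  qed
  ultimately show ?thesis by simp
qed

lemma Lcont: "continuous_on UNIV (Lf M)"
  unfolding Lf_def[abs_def] by (rule continuous_on_LBINT) (simp add: si_q)


lemma L0: "Lf M 0 = 0"
  using interval_integral_Icc[of 0 0 "qf M"] unfolding Lf_def by (simp add: zero_ereal_def)

lemma Kt: assumes "0 \<le> \<tau>" shows "(LINT x:{0..\<tau>}|M. x) = Lf M (cdf M \<tau>)"
proof -
  have "(LINT x:{0..\<tau>}|M. x) = (LINT x:{..\<tau>}|M. x)"
  proof (rule set_integral_cong_set)
    show "AE x in M. (x \<in> {..\<tau>}) = (x \<in> {0..\<tau>})" using nonneg by eventually_elim auto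
  qed (auto simp: set_borel_measurable_def)
  then show ?thesis using K1 by simp
qed

lemma Ktneg: assumes "\<tau> < 0" shows "(LINT x:{0..\<tau>}|M. x) = 0"
  using assms by (simp add: set_lebesgue_integral_def)

lemma Kth: "(LINT x:{\<theta>..}|M. x) = Lf M 1 - Lf M (cdf M \<theta>)"
proof -
  have a: "measure M {\<theta>} = 0" using contF isCont_cdf continuous_on_eq_continuous_at by blast
  then have "emeasure M {\<theta>} = 0" by (simp add: emeasure_eq_measure)
  then have ae: "AE x in M. x \<noteq> \<theta>"
    by (subst AE_iff_measurable[of "{\<theta>}"]) auto
  have "(LINT x:{..<\<theta>}|M. x) = (LINT x:{..\<theta>}|M. x)"
  proof (rule set_integral_cong_set)
    show "AE x in M. (x \<in> {..\<theta>}) = (x \<in> {..<\<theta>})" using ae by eventually_elim auto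
  qed (auto simp: set_borel_measurable_def)
  have si: "integrable M (\<lambda>x. indicator {..<\<theta>} x *\<^sub>R x)"
    by (rule integrable_mult_indicator[OF _ intM]) auto
  have "(LINT x:{\<theta>..}|M. x) = (LINT x|M. x - indicator {..<\<theta>} x *\<^sub>R x)"
    unfolding set_lebesgue_integral_def
    by (rule Bochner_Integration.integral_cong[OF refl]) (auto simp: indicator_def)
  also have "\<dots> = (LINT x|M. x) - (LINT x:{..<\<theta>}|M. x)"
    unfolding set_lebesgue_integral_def by (rule Bochner_Integration.integral_diff[OF intM si])
  finally show ?thesis using K1 K2 \<open>(LINT x:{..<\<theta>}|M. x) = (LINT x:{..\<theta>}|M. x)\<close> by simp
qed

lemma exists_level: assumes "0 < c" "c < Lf M 1" shows "\<exists>x\<ge>0. Lf M (cdf M x) = c"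
proof -
  obtain p where p: "0 \<le> p" "p \<le> 1" "Lf M p = c"
    using IVT'[of "Lf M" 0 c 1] assms L0 Lcont continuous_on_subset by fastforce
  have "p < 1" using p assms by (cases "p = 1") auto
  then have "eventually (\<lambda>x. p < cdf M x) at_top"
    using order_tendstoD(1)[OF cdf_lim_at_top_prob] by blast
  then obtain b where b: "\<And>x. x \<ge> b \<Longrightarrow> p < cdf M x" by (auto simp: eventually_at_top_linorder)
  define b' where "b' = max b 0"
  have "p < cdf M b'" using b by (simp add: b'_def)
  then obtain x where "0 \<le> x" "x \<le> b'" "cdf M x = p"
    using IVT'[of "cdf M" 0 p b'] F0 p contF continuous_on_subset by (fastforce simp: b'_def)
  then show ?thesis using p by auto
qed

lemma lorenz_eq: assumes "0 \<le> p" "p \<le> 1" shows "lorenz M p = Lf M p / Lf M 1"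
  unfolding lorenz_def using K_lorenz[OF assms] K2 by simp

end

lemma nndI: "real_distribution M \<Longrightarrow> AE x in M. 0 \<le> x \<Longrightarrow> continuous_on UNIV (cdf M)
  \<Longrightarrow> integrable M (\<lambda>x. x) \<Longrightarrow> nnd M"
  unfolding nnd_def nnd_axioms_def cdf_distribution_def by auto

lemma cmp: fixes L1 L2 :: "real \<Rightarrow> real"
  assumes "\<forall>p\<in>{0..1}. L2 p \<le> L1 p" "\<And>a b. 0 \<le> a \<Longrightarrow> a < b \<Longrightarrow> b \<le> 1 \<Longrightarrow> L1 a < L1 b"
    "0 \<le> p" "p \<le> 1" "0 \<le> q" "q \<le> 1" "L1 p = L2 q"
  shows "p \<le> q"
proof (rule ccontr)
  assume "\<not> p \<le> q"
  then have "L1 q < L1 p" using assms(2)[of q p] assms by auto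
  moreover have "L2 q \<le> L1 q" using assms by auto
  ultimately show False using assms by simp
qed

theorem mainTheorem3:
  fixes M1 M2 :: "real measure" and \<mu> r :: real
  assumes dist1: "real_distribution M1" and dist2: "real_distribution M2"
    and nonneg1: "AE x in M1. 0 \<le> x" and nonneg2: "AE x in M2. 0 \<le> x"
    and cont1: "continuous_on UNIV (cdf M1)" and cont2: "continuous_on UNIV (cdf M2)"
    and smono1: "strict_mono_on {x. 0 < cdf M1 x \<and> cdf M1 x < 1} (cdf M1)"
    and smono2: "strict_mono_on {x. 0 < cdf M2 x \<and> cdf M2 x < 1} (cdf M2)"
    and int1: "integrable M1 (\<lambda>x. x)" and int2: "integrable M2 (\<lambda>x. x)"
    and mean1: "(LINT x|M1. x) = \<mu>" and mean2: "(LINT x|M2. x) = \<mu>"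
    and mu_pos: "0 < \<mu>"
    and LC: "\<forall>p\<in>{0..1}. lorenz M1 p \<ge> lorenz M2 p"
    and r_pos: "0 < r"
  shows "(\<forall>m \<tau>1 \<tau>2 \<theta>1 \<theta>2. 1 < m \<and> r < m * \<mu>
            \<and> m * (LINT x:{0..\<tau>1}|M1. x) = r \<and> m * (LINT x:{0..\<tau>2}|M2. x) = r
            \<and> (LINT x:{\<theta>1..}|M1. x) = r / m \<and> (LINT x:{\<theta>2..}|M2. x) = r / m
          \<longrightarrow> cdf M1 \<tau>1 \<le> cdf M2 \<tau>2 \<and> 1 - cdf M1 \<theta>1 \<ge> 1 - cdf M2 \<theta>2)
      \<and> {m. 1 < m \<and> r < m * \<mu> \<and> (\<exists>\<theta>. (LINT x:{\<theta>..}|M2. x) = r / m \<and> 1 / m < 1 - cdf M2 \<theta>)}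
        \<subseteq> {m. 1 < m \<and> r < m * \<mu> \<and> (\<exists>\<theta>. (LINT x:{\<theta>..}|M1. x) = r / m \<and> 1 / m < 1 - cdf M1 \<theta>)}
      \<and> {m. 1 < m \<and> r < m * \<mu> \<and> (\<exists>\<tau>. m * (LINT x:{0..\<tau>}|M2. x) = r \<and> 1 / m > cdf M2 \<tau>)}
        \<subseteq> {m. 1 < m \<and> r < m * \<mu> \<and> (\<exists>\<tau>. m * (LINT x:{0..\<tau>}|M1. x) = r \<and> 1 / m > cdf M1 \<tau>)}"
proof -
  interpret A: nnd M1 using nndI dist1 nonneg1 cont1 int1 by blast
  interpret B: nnd M2 using nndI dist2 nonneg2 cont2 int2 by blast
  have mu1: "Lf M1 1 = \<mu>" using A.K2 mean1 by simp
  have mu2: "Lf M2 1 = \<mu>" using B.K2 mean2 by simp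
  have LL: "\<forall>p\<in>{0..1}. Lf M2 p \<le> Lf M1 p"
  proof
    fix p :: real assume "p \<in> {0..1}"
    then have "lorenz M2 p \<le> lorenz M1 p" using LC by auto
    then show "Lf M2 p \<le> Lf M1 p"
      using A.lorenz_eq B.lorenz_eq \<open>p \<in> {0..1}\<close> mu1 mu2 mu_pos by (auto simp: divide_le_cancel)
  qed
  have cm: "p \<le> q" if "0 \<le> p" "p \<le> 1" "0 \<le> q" "q \<le> 1" "Lf M1 p = Lf M2 q" for p q
    using cmp[OF LL _ that] A.Lmono by blast
  have F1: "0 \<le> cdf M1 x" "cdf M1 x \<le> 1" for x using A.cdf_nonneg A.cdf_bounded_prob by auto
  have F2: "0 \<le> cdf M2 x" "cdf M2 x \<le> 1" for x using B.cdf_nonneg B.cdf_bounded_prob by auto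
  have tau: "cdf M1 \<tau>1 \<le> cdf M2 \<tau>2"
    if "1 < m" "m * (LINT x:{0..\<tau>1}|M1. x) = r" "m * (LINT x:{0..\<tau>2}|M2. x) = r" for m \<tau>1 \<tau>2
  proof -
    have t1: "0 \<le> \<tau>1"
    proof (rule ccontr)
      assume "\<not> 0 \<le> \<tau>1" then show False using A.Ktneg[of \<tau>1] that r_pos by simp
    qed
    have t2: "0 \<le> \<tau>2"
    proof (rule ccontr)
      assume "\<not> 0 \<le> \<tau>2" then show False using B.Ktneg[of \<tau>2] that r_pos by simp
    qed
    have "Lf M1 (cdf M1 \<tau>1) = Lf M2 (cdf M2 \<tau>2)"
    proof -
      have "m * Lf M1 (cdf M1 \<tau>1) = m * Lf M2 (cdf M2 \<tau>2)"
        using that A.Kt[OF t1] B.Kt[OF t2] by simp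
      then show ?thesis using that(1) by simp
    qed
    then show ?thesis using cm F1 F2 by blast
  qed
  have theta: "cdf M1 \<theta>1 \<le> cdf M2 \<theta>2"
    if "(LINT x:{\<theta>1..}|M1. x) = r / m" "(LINT x:{\<theta>2..}|M2. x) = r / m" for m \<theta>1 \<theta>2
  proof -
    have "Lf M1 (cdf M1 \<theta>1) = Lf M2 (cdf M2 \<theta>2)"
      using that A.Kth[of \<theta>1] B.Kth[of \<theta>2] mu1 mu2 by simp
    then show ?thesis using cm F1 F2 by blast
  qed
  have P1: "(\<forall>m \<tau>1 \<tau>2 \<theta>1 \<theta>2. 1 < m \<and> r < m * \<mu>
            \<and> m * (LINT x:{0..\<tau>1}|M1. x) = r \<and> m * (LINT x:{0..\<tau>2}|M2. x) = r
            \<and> (LINT x:{\<theta>1..}|M1. x) = r / m \<and> (LINT x:{\<theta>2..}|M2. x) = r / m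
          \<longrightarrow> cdf M1 \<tau>1 \<le> cdf M2 \<tau>2 \<and> 1 - cdf M1 \<theta>1 \<ge> 1 - cdf M2 \<theta>2)"
    using tau theta by (metis diff_left_mono)
  have P2: "{m. 1 < m \<and> r < m * \<mu> \<and> (\<exists>\<theta>. (LINT x:{\<theta>..}|M2. x) = r / m \<and> 1 / m < 1 - cdf M2 \<theta>)}
        \<subseteq> {m. 1 < m \<and> r < m * \<mu> \<and> (\<exists>\<theta>. (LINT x:{\<theta>..}|M1. x) = r / m \<and> 1 / m < 1 - cdf M1 \<theta>)}"
  proof safe
    fix m \<theta> assume m: "1 < m" "r < m * \<mu>" and th: "(LINT x:{\<theta>..}|M2. x) = r / m" "1 / m < 1 - cdf M2 \<theta>"
    have "0 < \<mu> - r / m" using m by (simp add: field_simps)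
    moreover have "\<mu> - r / m < Lf M1 1" using mu1 m r_pos by simp
    ultimately obtain x where x: "Lf M1 (cdf M1 x) = \<mu> - r / m" using A.exists_level by blast
    have e: "(LINT y:{x..}|M1. y) = r / m" using A.Kth[of x] x mu1 by simp
    have "1 / m < 1 - cdf M1 x" using theta[OF e th(1)] th(2) by simp
    with e show "\<exists>\<theta>. (LINT x:{\<theta>..}|M1. x) = r / m \<and> 1 / m < 1 - cdf M1 \<theta>" by blast
  qed
  have P3: "{m. 1 < m \<and> r < m * \<mu> \<and> (\<exists>\<tau>. m * (LINT x:{0..\<tau>}|M2. x) = r \<and> 1 / m > cdf M2 \<tau>)}
        \<subseteq> {m. 1 < m \<and> r < m * \<mu> \<and> (\<exists>\<tau>. m * (LINT x:{0..\<tau>}|M1. x) = r \<and> 1 / m > cdf M1 \<tau>)}"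
  proof
    fix m assume "m \<in> {m. 1 < m \<and> r < m * \<mu> \<and> (\<exists>\<tau>. m * (LINT x:{0..\<tau>}|M2. x) = r \<and> 1 / m > cdf M2 \<tau>)}"
    then obtain \<tau> where m: "1 < m" "r < m * \<mu>" and t: "m * (LINT x:{0..\<tau>}|M2. x) = r" "1 / m > cdf M2 \<tau>" by blast
    have "0 < r / m" using m r_pos by simp
    moreover have "r / m < Lf M1 1" using mu1 m by (simp add: field_simps)
    ultimately obtain x where x: "0 \<le> x" "Lf M1 (cdf M1 x) = r / m" using A.exists_level by blast
    have e: "m * (LINT y:{0..x}|M1. y) = r" using A.Kt[OF x(1)] x m by simp
    have "cdf M1 x < 1 / m" using tau[OF m(1) e t(1)] t(2) by simp
    with e m show "m \<in> {m. 1 < m \<and> r < m * \<mu> \<and> (\<exists>\<tau>. m * (LINT x:{0..\<tau>}|M1. x) = r \<and> 1 / m > cdf M1 \<tau>)}" by blast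
  qed
  show ?thesis using P1 P2 P3 by blast
qed

end
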